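(* Consider a unitary one-parameter channel $\rho_0\mapsto U(\theta)\rho_0U(\theta)^\dagger$ on $\mathbb{C}^d$, with $U(\theta)$ unitary and differentiable in $\theta$, and fixed pure input $\rho_0=|\psi_0\rangle\langle\psi_0|$. Let $H(\theta)$ be the SLD quantum information of $\rho_{out}(\theta)=U(\theta)\rho_0U(\theta)^\dagger$ and $C_\Upsilon(\theta)=4\,\mathrm{tr}\{U'(\theta)\rho_0U'(\theta)^\dagger\}$. Then $H(\theta)=C_\Upsilon(\theta)$ if and only if $\mathrm{tr}\{U(\theta)\rho_0U'(\theta)^\dagger\}=0$.
   Context: A prime denotes $d/d\theta$. The SLD quantum information of a family $\rho(\theta)$ is $H(\theta)=\mathrm{tr}\{\rho\lambda^2\}$ where $\lambda$ is a self-adjoint solution of $\rho'=\frac12(\rho\lambda+\lambda\rho)$. For a unitary channel the canonical Kraus representation consists of the single operator $U(\theta)$, and $C_\Upsilon$ is the Sarovar–Milburn bound $4\sum_k\mathrm{tr}\{\Upsilon_k'\rho_0\Upsilon_k'^\dagger\}$ for it. *)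

theory Defs
  imports "HOL-Analysis.Analysis"
begin

text \<open>Operators on C^d are represented as complex^'n^'n with 'n a finite index type (d = CARD('n)).\<close>

definition mtrace :: "complex^'n^'n \<Rightarrow> complex" where
  "mtrace A = (\<Sum>i\<in>UNIV. A $ i $ i)"

definition adj :: "complex^'n^'n \<Rightarrow> complex^'n^'n" where
  "adj A = (\<chi> i j. cnj (A $ j $ i))"

definition hermitian_mat :: "complex^'n^'n \<Rightarrow> bool" where
  "hermitian_mat A \<longleftrightarrow> adj A = A"

definition unitary_mat :: "complex^'n^'n \<Rightarrow> bool" where
  "unitary_mat U \<longleftrightarrow> adj U ** U = mat 1 \<and> U ** adj U = mat 1"

definition proj :: "complex^'n \<Rightarrow> complex^'n^'n" where
  "proj \<psi> = (\<chi> i j. \<psi> $ i * cnj (\<psi> $ j))"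

definition sld_info :: "complex^'n^'n \<Rightarrow> complex^'n^'n \<Rightarrow> complex" where
  "sld_info \<rho> d\<rho> = (THE h. \<exists>L. hermitian_mat L \<and>
      d\<rho> = (1/2 :: real) *\<^sub>R (\<rho> ** L + L ** \<rho>) \<and>
      h = mtrace (\<rho> ** L ** L))"

end

theory Submission
  imports Defs
begin

lemma bilinear_mm: "bilinear ((**) :: complex^'n^'n \<Rightarrow> complex^'n^'n \<Rightarrow> complex^'n^'n)"
  unfolding bilinear_def linear_iff
  by (auto simp: matrix_matrix_mult_def vec_eq_iff algebra_simps sum.distrib sum_distrib_left scaleR_sum_right)

lemma bb_mm: "bounded_bilinear ((**) :: complex^'n^'n \<Rightarrow> complex^'n^'n \<Rightarrow> complex^'n^'n)"
  using bilinear_mm bilinear_conv_bounded_bilinear by blast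

lemma linear_adj: "linear (adj :: complex^'n^'n \<Rightarrow> complex^'n^'n)"
  unfolding linear_iff adj_def by (auto simp: vec_eq_iff)

lemma bl_adj: "bounded_linear (adj :: complex^'n^'n \<Rightarrow> complex^'n^'n)"
  using linear_adj linear_conv_bounded_linear by blast

definition smul :: "complex \<Rightarrow> complex^'n^'n \<Rightarrow> complex^'n^'n" where
  "smul c A = (\<chi> i j. c * A$i$j)"

lemma smul_left: "smul c A ** B = smul c (A ** B)"
  by (simp add: smul_def matrix_matrix_mult_def vec_eq_iff sum_distrib_left mult.assoc)
lemma smul_right: "A ** smul c B = smul c (A ** B)"
  by (simp add: smul_def matrix_matrix_mult_def vec_eq_iff sum_distrib_left mult.left_commute)
lemma smul_smul: "smul c (smul d A) = smul (c*d) A"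
  by (simp add: smul_def vec_eq_iff mult.assoc)
lemma mtrace_smul: "mtrace (smul c A) = c * mtrace A"
  by (simp add: smul_def mtrace_def sum_distrib_left)
lemma mtrace_add: "mtrace (A + B) = mtrace A + mtrace B"
  by (simp add: mtrace_def sum.distrib)
lemma mtrace_diff: "mtrace (A - B) = mtrace A - mtrace B"
  by (simp add: mtrace_def sum_subtractf)
lemma mtrace_minus: "mtrace (- A) = - mtrace A"
  by (simp add: mtrace_def sum_negf)
lemma mtrace_scaleR: "mtrace (r *\<^sub>R A) = of_real r * mtrace A"
  unfolding mtrace_def by (simp add: sum_distrib_left) (simp add: scaleR_conv_of_real)
lemma mtrace_comm: "mtrace (A ** B) = mtrace (B ** A)"
  unfolding mtrace_def matrix_matrix_mult_def
  by (simp, subst sum.swap, simp add: mult.commute)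

lemma adj_adj[simp]: "adj (adj A) = A"
  by (simp add: adj_def vec_eq_iff)
lemma adj_mult: "adj (A ** B) = adj B ** adj A"
  by (simp add: adj_def matrix_matrix_mult_def vec_eq_iff mult.commute)
lemma adj_mat1: "adj (mat 1 :: complex^'n^'n) = mat 1"
  by (simp add: adj_def mat_def vec_eq_iff)

lemma mtrace_conj:
  assumes "adj V ** V = mat 1"
  shows "mtrace (V ** M ** adj V) = mtrace M"
  by (metis assms mtrace_comm matrix_mul_assoc matrix_mul_lid)

lemma proj_idem:
  fixes \<psi> :: "complex^'n"
  assumes "norm \<psi> = 1"
  shows "proj \<psi> ** proj \<psi> = proj \<psi>"
proof -
  have "(\<Sum>k\<in>UNIV. (cmod (\<psi>$k))^2) = 1"
    using assms unfolding norm_vec_def L2_set_def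
    by (metis real_sqrt_eq_1_iff)
  hence s: "(\<Sum>k\<in>UNIV. cnj (\<psi>$k) * \<psi>$k) = 1"
    by (metis (no_types, lifting) complex_norm_square mult.commute of_real_1 of_real_sum sum.cong complex_mult_cnj)
  show ?thesis
    unfolding proj_def matrix_matrix_mult_def vec_eq_iff
  proof (intro allI)
    fix i j
    have "(\<Sum>k\<in>UNIV. \<psi>$i * cnj (\<psi>$k) * (\<psi>$k * cnj (\<psi>$j)))
        = \<psi>$i * cnj (\<psi>$j) * (\<Sum>k\<in>UNIV. cnj (\<psi>$k) * \<psi>$k)"
      by (simp add: sum_distrib_left mult.commute mult.left_commute)
    then show "(\<chi> i j. \<Sum>k\<in>UNIV. (\<chi> i j. \<psi> $ i * cnj (\<psi> $ j)) $ i $ k * (\<chi> i j. \<psi> $ i * cnj (\<psi> $ j)) $ k $ j) $ i $ j =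
         (\<chi> i j. \<psi> $ i * cnj (\<psi> $ j)) $ i $ j" using s by simp
  qed
qed

lemma proj_trace:
  fixes \<psi> :: "complex^'n"
  assumes "norm \<psi> = 1"
  shows "mtrace (proj \<psi>) = 1"
proof -
  have "(\<Sum>k\<in>UNIV. (cmod (\<psi>$k))^2) = 1"
    using assms unfolding norm_vec_def L2_set_def
    by (metis real_sqrt_eq_1_iff)
  hence s: "(\<Sum>k\<in>UNIV. \<psi>$k * cnj (\<psi>$k)) = 1"
    by (metis (no_types, lifting) complex_norm_square of_real_1 of_real_sum sum.cong complex_mult_cnj)
  thus ?thesis unfolding mtrace_def proj_def by simp
qed

lemma proj_sandwich:
  fixes \<psi> :: "complex^'n"
  shows "proj \<psi> ** X ** proj \<psi> = smul (mtrace (proj \<psi> ** X)) (proj \<psi>)"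
  unfolding proj_def matrix_matrix_mult_def vec_eq_iff smul_def mtrace_def
  by (simp add: sum_distrib_left sum_distrib_right mult.commute mult.left_commute)

lemma sld_generic:
  fixes \<rho> D :: "complex^'n^'n"
  assumes idem: "\<rho> ** \<rho> = \<rho>" and z: "\<rho> ** D ** \<rho> = 0" and s: "\<rho> ** D + D ** \<rho> = D"
    and h: "adj D = D"
  shows "sld_info \<rho> D = 4 * mtrace (\<rho> ** D ** D)"
  unfolding sld_info_def
proof (rule the_equality)
  have bl: "bounded_linear (adj :: complex^'n^'n \<Rightarrow> _)" by (rule bl_adj)
  show "\<exists>L. hermitian_mat L \<and> D = (1 / 2::real) *\<^sub>R (\<rho> ** L + L ** \<rho>) \<and> 4 * mtrace (\<rho> ** D ** D) = mtrace (\<rho> ** L ** L)"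
  proof (intro exI conjI)
    show "hermitian_mat ((2::real) *\<^sub>R D)" unfolding hermitian_mat_def
      using h by (simp add: adj_def vec_eq_iff)
    show "D = (1 / 2::real) *\<^sub>R (\<rho> ** ((2::real) *\<^sub>R D) + ((2::real) *\<^sub>R D) ** \<rho>)"
      using s by (simp add: bounded_bilinear.scaleR_left[OF bb_mm] bounded_bilinear.scaleR_right[OF bb_mm] scaleR_add_right[symmetric])
    show "4 * mtrace (\<rho> ** D ** D) = mtrace (\<rho> ** ((2::real) *\<^sub>R D) ** ((2::real) *\<^sub>R D))"
      by (simp add: bounded_bilinear.scaleR_left[OF bb_mm] bounded_bilinear.scaleR_right[OF bb_mm] mtrace_scaleR)
  qed
next
  fix hh assume "\<exists>L. hermitian_mat L \<and> D = (1 / 2::real) *\<^sub>R (\<rho> ** L + L ** \<rho>) \<and> hh = mtrace (\<rho> ** L ** L)"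
  then obtain L where eq: "D = (1 / 2::real) *\<^sub>R (\<rho> ** L + L ** \<rho>)" and hh: "hh = mtrace (\<rho> ** L ** L)" by blast
  have S: "\<rho> ** L + L ** \<rho> = (2::real) *\<^sub>R D" using eq by simp
  have "\<rho> ** (\<rho> ** L + L ** \<rho>) ** \<rho> = (2::real) *\<^sub>R (\<rho> ** D ** \<rho>)"
    by (simp add: S bounded_bilinear.scaleR_left[OF bb_mm] bounded_bilinear.scaleR_right[OF bb_mm])
  also have "\<rho> ** (\<rho> ** L + L ** \<rho>) ** \<rho> = (2::real) *\<^sub>R (\<rho> ** L ** \<rho>)"
    by (simp add: matrix_add_ldistrib bounded_bilinear.add_left[OF bb_mm] matrix_mul_assoc idem scaleR_2)
       (metis idem matrix_mul_assoc)
  finally have z2: "\<rho> ** L ** \<rho> = 0" using z by simp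
  have l1: "\<rho> ** L = (2::real) *\<^sub>R (\<rho> ** D)"
  proof -
    have "\<rho> ** (\<rho> ** L + L ** \<rho>) = \<rho> ** L" 
      by (simp add: matrix_add_ldistrib matrix_mul_assoc idem z2)
    then show ?thesis using S by (simp add: bounded_bilinear.scaleR_right[OF bb_mm])
  qed
  have l2: "L ** \<rho> = (2::real) *\<^sub>R (D ** \<rho>)"
  proof -
    have "(\<rho> ** L + L ** \<rho>) ** \<rho> = L ** \<rho>" 
      by (simp add: bounded_bilinear.add_left[OF bb_mm] z2) (metis idem matrix_mul_assoc)
    then show ?thesis using S by (simp add: bounded_bilinear.scaleR_left[OF bb_mm])
  qed
  have "hh = mtrace (\<rho> ** (\<rho> ** L ** L))" using hh idem by (simp add: matrix_mul_assoc)
  also have "\<dots> = mtrace ((\<rho> ** L) ** (L ** \<rho>))" by (metis mtrace_comm matrix_mul_assoc)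
  also have "\<dots> = 4 * mtrace (\<rho> ** D ** (D ** \<rho>))"
    by (simp add: l1 l2 bounded_bilinear.scaleR_left[OF bb_mm] bounded_bilinear.scaleR_right[OF bb_mm] mtrace_scaleR matrix_mul_assoc)
  also have "mtrace (\<rho> ** D ** (D ** \<rho>)) = mtrace (\<rho> ** D ** D)"
    by (metis idem mtrace_comm matrix_mul_assoc)
  finally show "hh = 4 * mtrace (\<rho> ** D ** D)" .
qed

theorem lemma4:
  fixes U :: "real \<Rightarrow> complex^'n^'n" and \<psi>0 :: "complex^'n" and \<theta> :: real
  assumes unitary: "\<And>t. unitary_mat (U t)"
    and diff: "\<And>t. U differentiable (at t)"
    and unit: "norm \<psi>0 = 1"
  defines "\<rho>out \<equiv> (\<lambda>t. U t ** proj \<psi>0 ** adj (U t))"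
    and "U' \<equiv> vector_derivative U (at \<theta>)"
  shows "sld_info (\<rho>out \<theta>) (vector_derivative \<rho>out (at \<theta>))
           = 4 * mtrace (U' ** proj \<psi>0 ** adj U')
         \<longleftrightarrow> mtrace (U \<theta> ** proj \<psi>0 ** adj U') = 0"
proof -
  define V where "V = U \<theta>"
  define W where "W = U'"
  define P where "P = proj \<psi>0"
  have dU: "(U has_vector_derivative W) (at \<theta>)"
    unfolding W_def U'_def using diff vector_derivative_works by blast
  have dadj: "((\<lambda>t. adj (U t)) has_vector_derivative adj W) (at \<theta>)"
    by (rule bounded_linear.has_vector_derivative[OF bl_adj dU])
  have d1: "((\<lambda>t. U t ** P) has_vector_derivative (V ** 0 + W ** P)) (at \<theta>)"
    unfolding V_def by (rule bounded_bilinear.has_vector_derivative[OF bb_mm dU has_vector_derivative_const])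
  have d2: "((\<lambda>t. U t ** P ** adj (U t)) has_vector_derivative (V ** P ** adj W + (V ** 0 + W ** P) ** adj V)) (at \<theta>)"
    unfolding V_def by (rule bounded_bilinear.has_vector_derivative[OF bb_mm d1[unfolded V_def] dadj])
  have Dval: "vector_derivative \<rho>out (at \<theta>) = W ** P ** adj V + V ** P ** adj W"
    using vector_derivative_at[OF d2] unfolding \<rho>out_def P_def by (simp add: add.commute)
  have VV: "adj V ** V = mat 1" "V ** adj V = mat 1" using unitary unfolding V_def unitary_mat_def by auto
  have dK: "((\<lambda>t. adj (U t) ** U t) has_vector_derivative (adj V ** W + adj W ** V)) (at \<theta>)"
    unfolding V_def by (rule bounded_bilinear.has_vector_derivative[OF bb_mm dadj dU])
  have "(\<lambda>t. adj (U t) ** U t) = (\<lambda>t. mat 1)" using unitary unfolding unitary_mat_def by auto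
  hence K: "adj V ** W + adj W ** V = 0"
    using dK vector_derivative_unique_at[OF dK] has_vector_derivative_const
    by (metis vector_derivative_unique_at)
  define X where "X = adj V ** W"
  have WX: "W = V ** X" unfolding X_def by (simp add: matrix_mul_assoc VV)
  have aX: "adj X = - X"
  proof -
    have "adj X = adj W ** V" unfolding X_def by (simp add: adj_mult)
    thus ?thesis using K unfolding X_def by (simp add: eq_neg_iff_add_eq_0 add.commute)
  qed
  have PP: "P ** P = P" unfolding P_def by (rule proj_idem[OF unit])
  have sand: "\<And>Y. P ** Y ** P = smul (mtrace (P ** Y)) P" unfolding P_def by (rule proj_sandwich)
  have PP': "\<And>Y. Y ** P ** P = Y ** P" by (metis PP matrix_mul_assoc)
  have sand': "\<And>Y Z. Y ** P ** Z ** P = smul (mtrace (P ** Z)) (Y ** P)"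
    by (metis sand smul_right matrix_mul_assoc)
  have aP: "adj P = P" unfolding P_def proj_def adj_def by (simp add: vec_eq_iff)
  define M where "M = X ** P - P ** X"
  have aW: "adj W = - (X ** adj V)" by (simp add: WX adj_mult aX bounded_bilinear.minus_left[OF bb_mm])
  have cj: "\<And>A B. (V ** A ** adj V) ** (V ** B ** adj V) = V ** (A ** B) ** adj V"
    by (metis VV(1) matrix_mul_assoc matrix_mul_rid)
  have rho: "\<rho>out \<theta> = V ** P ** adj V" unfolding \<rho>out_def V_def P_def ..
  have D: "vector_derivative \<rho>out (at \<theta>) = V ** M ** adj V"
    unfolding Dval M_def aW WX
    by (simp add: bounded_bilinear.diff_left[OF bb_mm] bounded_bilinear.diff_right[OF bb_mm]
         bounded_bilinear.minus_left[OF bb_mm] bounded_bilinear.minus_right[OF bb_mm] matrix_mul_assoc adj_mult aX)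
  have m1: "P ** M ** P = 0" unfolding M_def
    by (simp add: bounded_bilinear.diff_left[OF bb_mm] bounded_bilinear.diff_right[OF bb_mm] matrix_mul_assoc PP PP')
  have m2: "P ** M + M ** P = M" unfolding M_def
    by (simp add: bounded_bilinear.diff_left[OF bb_mm] bounded_bilinear.diff_right[OF bb_mm] matrix_mul_assoc PP PP')
  have m3: "adj M = M" unfolding M_def
    by (simp add: adj_mult aX aP bounded_bilinear.minus_left[OF bb_mm] bounded_bilinear.minus_right[OF bb_mm] linear_diff[OF linear_adj])
  have H: "sld_info (\<rho>out \<theta>) (vector_derivative \<rho>out (at \<theta>)) = 4 * mtrace (P ** M ** M)"
  proof -
    have "sld_info (V ** P ** adj V) (V ** M ** adj V) = 4 * mtrace ((V ** P ** adj V) ** (V ** M ** adj V) ** (V ** M ** adj V))"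
    proof (rule sld_generic)
      show "V ** P ** adj V ** (V ** P ** adj V) = V ** P ** adj V" by (simp add: cj PP)
      show "V ** P ** adj V ** (V ** M ** adj V) ** (V ** P ** adj V) = 0" by (simp add: cj m1)
      show "V ** P ** adj V ** (V ** M ** adj V) + V ** M ** adj V ** (V ** P ** adj V) = V ** M ** adj V"
        by (simp only: cj) (metis m2 bounded_bilinear.add_left[OF bb_mm] matrix_add_ldistrib)
      show "adj (V ** M ** adj V) = V ** M ** adj V" by (simp add: adj_mult m3 matrix_mul_assoc)
    qed
    also have "\<dots> = 4 * mtrace (P ** M ** M)" by (simp add: cj mtrace_conj VV)
    finally show ?thesis using rho D by simp
  qed
  define a where "a = mtrace (P ** X)"
  have trP: "mtrace P = 1" unfolding P_def by (rule proj_trace[OF unit])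
  have tXX: "mtrace (P ** X ** X ** P) = mtrace (P ** X ** X)"
    by (metis PP mtrace_comm matrix_mul_assoc)
  have h2: "mtrace (P ** M ** M) = a * a - mtrace (P ** X ** X)" unfolding M_def a_def
    by (simp add: bounded_bilinear.diff_left[OF bb_mm] bounded_bilinear.diff_right[OF bb_mm] matrix_mul_assoc PP PP' sand sand' smul_left smul_right smul_smul mtrace_diff mtrace_smul trP tXX)
  have c1: "mtrace (U' ** proj \<psi>0 ** adj U') = - mtrace (P ** X ** X)"
  proof -
    have "W ** P ** adj W = V ** (X ** P ** adj X) ** adj V" by (simp add: WX adj_mult matrix_mul_assoc)
    hence "mtrace (W ** P ** adj W) = mtrace (X ** P ** adj X)" by (simp add: mtrace_conj VV)
    also have "\<dots> = - mtrace (X ** P ** X)" by (simp add: aX bounded_bilinear.minus_right[OF bb_mm] mtrace_minus)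
    also have "mtrace (X ** P ** X) = mtrace (P ** X ** X)" by (metis mtrace_comm matrix_mul_assoc)
    finally show ?thesis unfolding W_def P_def .
  qed
  have c2: "mtrace (U \<theta> ** proj \<psi>0 ** adj U') = - a"
  proof -
    have "V ** P ** adj W = V ** (P ** adj X) ** adj V" by (simp add: WX adj_mult matrix_mul_assoc)
    hence "mtrace (V ** P ** adj W) = mtrace (P ** adj X)" by (simp add: mtrace_conj VV)
    also have "\<dots> = - a" by (simp add: a_def aX bounded_bilinear.minus_right[OF bb_mm] mtrace_minus)
    finally show ?thesis unfolding W_def P_def V_def .
  qed
  show ?thesis using H h2 c1 c2 by simp
qed

end
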